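(* Let $\mathbb{K}\in\{\mathbb{R},\mathbb{C}\}$ and let $\mathcal{X}$ be a topological $\mathbb{K}$-vector space whose topological dual $\mathcal{X}^{\ast}$ separates the points of $\mathcal{X}$. Then $\mathbf{CF}(\mathcal{X}^{\ast})$, endowed with the (subspace topology of the) weak*-Hausdorff hypertopology, is a Hausdorff space.
   Context: Topological vector spaces are Hausdorff. $\mathcal{X}^{\ast}$ carries the weak* topology. $\mathbf{F}(\mathcal{X}^{\ast})$ is the set of nonempty weak*-closed subsets of $\mathcal{X}^{\ast}$ and $\mathbf{CF}(\mathcal{X}^{\ast})\subseteq\mathbf{F}(\mathcal{X}^{\ast})$ the subset of convex ones. The weak*-Hausdorff hypertopology on $\mathbf{F}(\mathcal{X}^{\ast})$ is the topology generated by the family of extended pseudometrics $d_H^{(A)}(F,\tilde F)=\max\{\sup_{\sigma\in F}\inf_{\tilde\sigma\in\tilde F}|(\sigma-\tilde\sigma)(A)|,\ \sup_{\tilde\sigma\in\tilde F}\inf_{\sigma\in F}|(\sigma-\tilde\sigma)(A)|\}\in[0,\infty]$, $A\in\mathcal{X}$. *)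

theory Defs
  imports "HOL-Analysis.Analysis"
begin

text \<open>A topological vector space over the scalar field 'k (a real normed field,
  i.e. R or C up to isomorphism by Mazur's theorem), with scalar multiplication
  sc.\<close>
definition tvs :: "('k::real_normed_field \<Rightarrow> 'v::{ab_group_add,t2_space} \<Rightarrow> 'v) \<Rightarrow> bool" where
  "tvs sc \<longleftrightarrow> vector_space sc
     \<and> continuous_on UNIV (\<lambda>p::'v \<times> 'v. fst p + snd p)
     \<and> continuous_on UNIV (\<lambda>p::'k \<times> 'v. sc (fst p) (snd p))"

definition tdual :: "('k::real_normed_field \<Rightarrow> 'v::{ab_group_add,topological_space} \<Rightarrow> 'v) \<Rightarrow> ('v \<Rightarrow> 'k) set" where
  "tdual sc = {f. Vector_Spaces.linear sc (*) f \<and> continuous_on UNIV f}"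

text \<open>Weak* topology on the dual: topology of pointwise convergence, i.e. the
  subspace topology of the product topology on 'v \<Rightarrow> 'k.\<close>
definition weak_star :: "('k::real_normed_field \<Rightarrow> 'v::{ab_group_add,topological_space} \<Rightarrow> 'v) \<Rightarrow> ('v \<Rightarrow> 'k) topology" where
  "weak_star sc = subtopology (product_topology (\<lambda>_. euclidean) UNIV) (tdual sc)"

definition convex_fun_set :: "('v \<Rightarrow> 'k::real_normed_field) set \<Rightarrow> bool" where
  "convex_fun_set F \<longleftrightarrow> (\<forall>\<sigma>\<in>F. \<forall>\<tau>\<in>F. \<forall>t::real. 0 \<le> t \<and> t \<le> 1 \<longrightarrow>
      (\<lambda>x. of_real t * \<sigma> x + of_real (1 - t) * \<tau> x) \<in> F)"

definition Fstar :: "('k::real_normed_field \<Rightarrow> 'v::{ab_group_add,topological_space} \<Rightarrow> 'v) \<Rightarrow> ('v \<Rightarrow> 'k) set set" where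
  "Fstar sc = {F. F \<noteq> {} \<and> closedin (weak_star sc) F}"

definition CFstar :: "('k::real_normed_field \<Rightarrow> 'v::{ab_group_add,topological_space} \<Rightarrow> 'v) \<Rightarrow> ('v \<Rightarrow> 'k) set set" where
  "CFstar sc = {F \<in> Fstar sc. convex_fun_set F}"

definition dH :: "'v \<Rightarrow> ('v \<Rightarrow> 'k::real_normed_field) set \<Rightarrow> ('v \<Rightarrow> 'k) set \<Rightarrow> ereal" where
  "dH A F G = max (SUP \<sigma>\<in>F. INF \<tau>\<in>G. ereal (norm (\<sigma> A - \<tau> A)))
                  (SUP \<tau>\<in>G. INF \<sigma>\<in>F. ereal (norm (\<sigma> A - \<tau> A)))"

text \<open>Topology on a family FF of sets generated by the family of extended
  pseudometrics dH A, A in 'v: U is open iff around each point F of U some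
  finite intersection of dH-balls of common radius is contained in U.\<close>
definition hyper_topology :: "('v \<Rightarrow> 'k::real_normed_field) set set \<Rightarrow> ('v \<Rightarrow> 'k) set topology" where
  "hyper_topology FF = topology (\<lambda>U. U \<subseteq> FF \<and> (\<forall>F\<in>U. \<exists>S e. finite S \<and> e > 0 \<and>
      {G \<in> FF. \<forall>A\<in>S. dH A F G < ereal e} \<subseteq> U))"

lemma istopology_hyper:
  "istopology (\<lambda>U. U \<subseteq> FF \<and> (\<forall>F\<in>U. \<exists>S e. finite S \<and> e > 0 \<and>
      {G \<in> FF. \<forall>A\<in>S. dH A F G < ereal e} \<subseteq> U))"
  unfolding istopology_def
proof (rule conjI; intro allI impI)
  fix U V
  assume h: "(U \<subseteq> FF \<and> (\<forall>F\<in>U. \<exists>S e. finite S \<and> e > 0 \<and> {G \<in> FF. \<forall>A\<in>S. dH A F G < ereal e} \<subseteq> U))"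
             "(V \<subseteq> FF \<and> (\<forall>F\<in>V. \<exists>S e. finite S \<and> e > 0 \<and> {G \<in> FF. \<forall>A\<in>S. dH A F G < ereal e} \<subseteq> V))"
  show "U \<inter> V \<subseteq> FF \<and> (\<forall>F\<in>U \<inter> V. \<exists>S e. finite S \<and> e > 0 \<and> {G \<in> FF. \<forall>A\<in>S. dH A F G < ereal e} \<subseteq> U \<inter> V)"
  proof (intro conjI ballI)
    show "U \<inter> V \<subseteq> FF" using h by blast
    fix F assume "F \<in> U \<inter> V"
    then have "F \<in> U" "F \<in> V" by auto
    from \<open>F \<in> U\<close> h obtain S1 e1 where a: "finite S1" "e1 > 0" "{G \<in> FF. \<forall>A\<in>S1. dH A F G < ereal e1} \<subseteq> U"
      by blast
    from \<open>F \<in> V\<close> h obtain S2 e2 where b: "finite S2" "e2 > 0" "{G \<in> FF. \<forall>A\<in>S2. dH A F G < ereal e2} \<subseteq> V"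
      by blast
    have "{G \<in> FF. \<forall>A\<in>S1 \<union> S2. dH A F G < ereal (min e1 e2)} \<subseteq> U \<inter> V"
      using a(3) b(3) by (force simp: less_le_trans)
    then show "\<exists>S e. finite S \<and> e > 0 \<and> {G \<in> FF. \<forall>A\<in>S. dH A F G < ereal e} \<subseteq> U \<inter> V"
      using a b by (intro exI[of _ "S1 \<union> S2"] exI[of _ "min e1 e2"]) auto
  qed
next
  fix K
  assume h: "\<forall>U\<in>K. U \<subseteq> FF \<and> (\<forall>F\<in>U. \<exists>S e. finite S \<and> e > 0 \<and> {G \<in> FF. \<forall>A\<in>S. dH A F G < ereal e} \<subseteq> U)"
  show "\<Union>K \<subseteq> FF \<and> (\<forall>F\<in>\<Union>K. \<exists>S e. finite S \<and> e > 0 \<and> {G \<in> FF. \<forall>A\<in>S. dH A F G < ereal e} \<subseteq> \<Union>K)"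
    using h by (meson Union_iff Union_least subset_iff)
qed

end

theory Submission
  imports Defs "HOL-Computational_Algebra.Fundamental_Theorem_Algebra"
begin

lemma map_poly_add_hom:
  fixes f :: "'a::comm_ring_1 \<Rightarrow> 'b::comm_ring_1"
  assumes "\<And>x y. f (x + y) = f x + f y" "f 0 = 0"
  shows "map_poly f (p + q) = map_poly f p + map_poly f q"
  by (rule poly_eqI) (simp add: coeff_map_poly assms)

lemma map_poly_minus_hom:
  fixes f :: "'a::comm_ring_1 \<Rightarrow> 'b::comm_ring_1"
  assumes "\<And>x y. f (x + y) = f x + f y" "f 0 = 0"
  shows "map_poly f (p - q) = map_poly f p - map_poly f q"
proof -
  have m: "f (- x) = - f x" for x using assms(1)[of x "-x"] assms(2) by (simp add: add.commute eq_neg_iff_add_eq_0)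
  have d: "f (x - y) = f x - f y" for x y using assms(1)[of x "-y"] m by simp
  show ?thesis by (rule poly_eqI) (simp add: coeff_map_poly assms d)
qed

lemma map_poly_mult_hom:
  fixes f :: "'a::comm_ring_1 \<Rightarrow> 'b::comm_ring_1"
  assumes "\<And>x y. f (x + y) = f x + f y" "\<And>x y. f (x * y) = f x * f y" "f 0 = 0"
  shows "map_poly f (p * q) = map_poly f p * map_poly f q"
proof (induction p)
  case 0 then show ?case by simp
next
  case (pCons a p)
  have "map_poly f (pCons a p * q) = map_poly f (smult a q + pCons 0 (p * q))" by simp
  also have "\<dots> = map_poly f (smult a q) + map_poly f (pCons 0 (p * q))"
    by (rule map_poly_add_hom) (use assms in auto)
  also have "map_poly f (smult a q) = smult (f a) (map_poly f q)"
    by (rule poly_eqI) (simp add: coeff_map_poly assms)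
  also have "map_poly f (pCons 0 (p * q)) = pCons 0 (map_poly f (p * q))"
    by (simp add: map_poly_pCons assms)
  finally have "map_poly f (pCons a p * q) = smult (f a) (map_poly f q) + pCons 0 (map_poly f (p * q))" .
  moreover have "map_poly f (pCons a p) = pCons (f a) (map_poly f p)"
    using pCons by (simp add: map_poly_pCons assms)
  ultimately show ?case using pCons by simp
qed

lemma map_poly_prod_hom:
  fixes f :: "'a::comm_ring_1 \<Rightarrow> 'b::comm_ring_1"
  assumes "\<And>x y. f (x + y) = f x + f y" "\<And>x y. f (x * y) = f x * f y" "f 0 = 0" "f 1 = 1"
  shows "map_poly f (\<Prod>i\<in>A. P i) = (\<Prod>i\<in>A. map_poly f (P i))"
proof (induction A rule: infinite_finite_induct)
  case (insert x F)
  then show ?case by (simp add: map_poly_mult_hom assms)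
qed (simp_all add: assms)

lemma map_poly_power_hom:
  fixes f :: "'a::comm_ring_1 \<Rightarrow> 'b::comm_ring_1"
  assumes "\<And>x y. f (x + y) = f x + f y" "\<And>x y. f (x * y) = f x * f y" "f 0 = 0" "f 1 = 1"
  shows "map_poly f (p ^ n) = (map_poly f p) ^ n"
  by (induction n) (simp_all add: map_poly_mult_hom assms)

lemma poly_key:
  fixes \<xi> :: "'k::real_normed_field" and G :: "real poly" and z1 :: complex
  assumes lc: "lead_coeff G = 1" and root: "poly (map_poly complex_of_real G) z1 = 0"
    and fm: "\<And>z. m \<le> norm (\<xi>^2 - of_real (2 * Re z) * \<xi> + of_real ((cmod z)^2))" and m0: "0 \<le> m"
  shows "norm (\<xi>^2 - of_real (2 * Re z1) * \<xi> + of_real ((cmod z1)^2)) * m ^ (degree G - 1)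
          \<le> norm (poly (map_poly of_real G) \<xi>) ^ 2"
proof -
  define f where "f z = norm (\<xi>^2 - of_real (2 * Re z) * \<xi> + of_real ((cmod z)^2))" for z
  define QR where "QR z = [:(cmod z)^2, -2 * Re z, 1:]" for z
  define Gc where "Gc = map_poly complex_of_real G"
  define N where "N = degree G"
  have hc: "\<And>x y. complex_of_real (x + y) = of_real x + of_real y" "\<And>x y. complex_of_real (x * y) = of_real x * of_real y"
     "complex_of_real 0 = 0" "complex_of_real 1 = 1" by simp_all
  have hk: "\<And>x y. (of_real (x + y)::'k) = of_real x + of_real y" "\<And>x y. (of_real (x * y)::'k) = of_real x * of_real y"
     "(of_real 0::'k) = 0" "(of_real 1::'k) = 1" by simp_all
  have hcnj: "\<And>x y. cnj (x + y) = cnj x + cnj y" "\<And>x y. cnj (x * y) = cnj x * cnj y"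
     "cnj 0 = 0" "cnj 1 = 1" by simp_all
  have degGc: "degree Gc = N" unfolding Gc_def N_def by (rule degree_map_poly) simp
  have lcGc: "lead_coeff Gc = 1" using lc by (simp add: Gc_def N_def degGc[unfolded Gc_def N_def] coeff_map_poly)
  obtain r where dec: "smult (lead_coeff Gc) (\<Prod>i<degree Gc. [:-r i, 1:]) = Gc"
    using complex_poly_decompose' by blast
  have Gcp: "Gc = (\<Prod>i<N. [:-r i, 1:])" using dec lcGc degGc by simp
  have "map_poly cnj Gc = Gc"
    unfolding Gc_def by (subst map_poly_map_poly) (auto intro: map_poly_cong)
  moreover have "map_poly cnj Gc = (\<Prod>i<N. [:-cnj (r i), 1:])"
    unfolding Gcp by (subst map_poly_prod_hom) (simp_all add: map_poly_pCons)
  ultimately have Gcc: "Gc = (\<Prod>i<N. [:-cnj (r i), 1:])" by simp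
  have fac: "[:-z, 1:] * [:-cnj z, 1:] = map_poly complex_of_real (QR z)" for z
  proof -
    have "[:-z, 1:] * [:-cnj z, 1:] = [:z * cnj z, - (z + cnj z), 1:]"
      by (simp add: algebra_simps)
    also have "\<dots> = map_poly complex_of_real (QR z)"
      unfolding QR_def complex_mult_cnj complex_add_cnj cmod_power2 by (simp add: map_poly_pCons)
    finally show ?thesis .
  qed
  have "Gc * Gc = (\<Prod>i<N. [:-r i, 1:] * [:-cnj (r i), 1:])"
  proof -
    have "Gc * Gc = (\<Prod>i<N. [:-r i, 1:]) * (\<Prod>i<N. [:-cnj (r i), 1:])"
      using Gcp Gcc by metis
    then show ?thesis by (simp only: prod.distrib)
  qed
  also have "\<dots> = map_poly complex_of_real (\<Prod>i<N. QR (r i))"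
    by (simp only: fac[symmetric] map_poly_prod_hom[OF hc])
  finally have "map_poly complex_of_real (G * G) = map_poly complex_of_real (\<Prod>i<N. QR (r i))"
    unfolding Gc_def by (simp add: map_poly_mult_hom)
  then have "map_poly Re (map_poly complex_of_real (G * G)) = map_poly Re (map_poly complex_of_real (\<Prod>i<N. QR (r i)))"
    by simp
  then have GG: "G * G = (\<Prod>i<N. QR (r i))"
    by (simp add: map_poly_map_poly o_def)
  have "(poly (map_poly of_real G) \<xi>)^2 = poly (map_poly of_real (G * G)) \<xi>"
    by (simp add: map_poly_mult_hom power2_eq_square)
  also have "\<dots> = (\<Prod>i<N. poly (map_poly of_real (QR (r i))) \<xi>)"
    by (simp add: GG map_poly_prod_hom poly_prod)
  also have "\<dots> = (\<Prod>i<N. \<xi>^2 - of_real (2 * Re (r i)) * \<xi> + of_real ((cmod (r i))^2))"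
    by (intro prod.cong refl) (simp add: QR_def map_poly_pCons algebra_simps power2_eq_square)
  finally have "norm (poly (map_poly of_real G) \<xi>) ^ 2 = (\<Prod>i<N. f (r i))"
    unfolding f_def by (simp add: prod_norm norm_power[symmetric])
  moreover obtain i0 where i0: "i0 < N" "r i0 = z1"
  proof -
    have "poly Gc z1 = (\<Prod>i<N. z1 - r i)" by (simp add: Gcp poly_prod)
    then have "(\<Prod>i<N. z1 - r i) = 0" using root Gc_def by simp
    then show ?thesis using that by auto
  qed
  moreover have "f z1 * m ^ (N - 1) \<le> (\<Prod>i<N. f (r i))"
  proof -
    have "(\<Prod>i<N. f (r i)) = f (r i0) * (\<Prod>i\<in>{..<N} - {i0}. f (r i))"
      using i0 by (subst prod.remove[of _ i0]) auto
    moreover have "m ^ (N - 1) = (\<Prod>i\<in>{..<N} - {i0}. m)" using i0 by simp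
    moreover have "(\<Prod>i\<in>{..<N} - {i0}. m) \<le> (\<Prod>i\<in>{..<N} - {i0}. f (r i))"
      by (intro prod_mono) (use fm m0 f_def in auto)
    moreover have "0 \<le> f z1" by (simp add: f_def)
    ultimately show ?thesis using i0 by (simp add: mult_left_mono)
  qed
  ultimately show ?thesis unfolding f_def N_def by simp
qed

lemma quad_root:
  fixes \<xi> :: "'k::real_normed_field"
  shows "\<exists>z::complex. \<xi>^2 - of_real (2 * Re z) * \<xi> + of_real ((cmod z)^2) = 0"
proof -
  define q where "q z = \<xi>^2 - of_real (2 * Re z) * \<xi> + of_real ((cmod z)^2)" for z :: complex
  define f where "f z = norm (q z)" for z
  have cont: "continuous_on UNIV f" unfolding f_def q_def by (intro continuous_intros)
  define a where "a = norm \<xi>"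
  have coer: "f z \<ge> (cmod z)^2 - 2 * cmod z * a - a^2" for z
  proof -
    have e: "(of_real ((cmod z)^2)::'k) = q z - \<xi>^2 + of_real (2 * Re z) * \<xi>" by (simp add: q_def)
    have "norm (of_real ((cmod z)^2)::'k) \<le> norm (q z) + norm (\<xi>^2) + norm (of_real (2 * Re z) * \<xi>)"
    proof -
      have "norm (q z - \<xi>^2 + of_real (2 * Re z) * \<xi>) \<le> norm (q z - \<xi>^2) + norm (of_real (2 * Re z) * \<xi>)"
        by (rule norm_triangle_ineq)
      moreover have "norm (q z - \<xi>^2) \<le> norm (q z) + norm (\<xi>^2)" by (rule norm_triangle_ineq4)
      ultimately show ?thesis unfolding e by linarith
    qed
    moreover have "norm (of_real (2 * Re z) * \<xi>) \<le> 2 * cmod z * a"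
      using abs_Re_le_cmod[of z] by (simp add: norm_mult a_def mult_right_mono)
    ultimately show ?thesis by (simp add: f_def a_def norm_power)
  qed
  define R0 where "R0 = 3 * a + 1"
  have a0: "a \<ge> 0" by (simp add: a_def)
  have f0: "f 0 = a^2" by (simp add: f_def q_def a_def norm_power)
  have big: "f z > f 0" if "cmod z \<ge> R0" for z
  proof -
    have "(cmod z)^2 - 2 * cmod z * a - a^2 > a^2"
    proof -
      have "cmod z - a \<ge> 2 * a + 1" using that unfolding R0_def by simp
      then have "(cmod z - a)^2 \<ge> (2 * a + 1)^2" by (rule power_mono) (use a0 in simp)
      then show ?thesis using a0 mult_nonneg_nonneg[OF a0 a0] by (simp add: power2_eq_square algebra_simps, linarith)
    qed
    then show ?thesis using coer[of z] f0 by simp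
  qed
  obtain zm where zm: "zm \<in> cball 0 R0" "\<And>y. y \<in> cball 0 R0 \<Longrightarrow> f zm \<le> f y"
  proof -
    have "cball (0::complex) R0 \<noteq> {}" using a0 R0_def by simp
    moreover have "continuous_on (cball 0 R0) f" using cont by (rule continuous_on_subset) simp
    ultimately show ?thesis using continuous_attains_inf[OF compact_cball, of 0 R0 f] that by blast
  qed
  have minf: "f zm \<le> f z" for z
  proof (cases "cmod z \<le> R0")
    case True then show ?thesis using zm by (simp add: dist_norm)
  next
    case False
    then have "f z > f 0" using big by simp
    moreover have "f zm \<le> f 0" using zm(2)[of 0] a0 R0_def by simp
    ultimately show ?thesis by simp
  qed
  define m where "m = f zm"
  show ?thesis
  proof (cases "m = 0")
    case True then show ?thesis using m_def f_def q_def by auto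
  next
    case False
    then have mpos: "m > 0" using m_def f_def by simp
    define M where "M = {z. f z = m}"
    have Msub: "M \<subseteq> cball 0 R0"
    proof
      fix z assume "z \<in> M"
      then have "f z = m" by (simp add: M_def)
      moreover have "f zm \<le> f 0" using minf by simp
      ultimately have "\<not> f z > f 0" using m_def by simp
      then show "z \<in> cball 0 R0" using big by (force simp: dist_norm)
    qed
    have "closed M" unfolding M_def by (rule closed_Collect_eq[OF cont]) simp
    then have cM: "compact M" using Msub by (meson bounded_cball bounded_subset compact_eq_bounded_closed)
    have "zm \<in> M" by (simp add: M_def m_def)
    then obtain z0 where z0: "z0 \<in> M" "\<And>z. z \<in> M \<Longrightarrow> cmod z \<le> cmod z0"
      using continuous_attains_sup[OF cM, of cmod] by (metis continuous_on_norm_id empty_iff)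
    have fz0: "f z0 = m" using z0 by (simp add: M_def)
    define \<epsilon> where "\<epsilon> = m / 2"
    have eps: "0 < \<epsilon>" "\<epsilon> < m" using mpos by (simp_all add: \<epsilon>_def)
    define z1 where "z1 = Complex (Re z0) (sqrt ((Im z0)^2 + \<epsilon>))"
    have cz1: "(cmod z1)^2 = (cmod z0)^2 + \<epsilon>"
      using eps by (simp add: z1_def cmod_power2)
    have "z1 \<notin> M"
    proof
      assume "z1 \<in> M"
      then have "cmod z1 \<le> cmod z0" using z0 by simp
      then have "(cmod z1)^2 \<le> (cmod z0)^2" by (simp add: power_mono)
      then show False using cz1 eps by simp
    qed
    then have fz1: "f z1 > m" using minf[of z1] m_def M_def by force
    have qz1: "q z1 = q z0 + of_real \<epsilon>" unfolding q_def using cz1 by (simp add: z1_def)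
    define QR0 where "QR0 = [:(cmod z0)^2, -2 * Re z0, 1:]"
    have ineq: "f z1 * m ^ (2 * n - 1) \<le> (m ^ n + \<epsilon> ^ n)^2" if n1: "n \<ge> 1" for n
    proof -
      define G where "G = QR0 ^ n + [:- ((- \<epsilon>) ^ n):]"
      have degQ: "degree QR0 = 2" "lead_coeff QR0 = 1" by (simp_all add: QR0_def)
      have dQn: "degree (QR0 ^ n) = 2 * n" "lead_coeff (QR0 ^ n) = 1"
      proof -
        have "QR0 \<noteq> 0" by (simp add: QR0_def)
        then show "degree (QR0 ^ n) = 2 * n" "lead_coeff (QR0 ^ n) = 1"
          using degQ lead_coeff_power[of QR0 n] by (simp_all add: degree_power_eq mult.commute)
      qed
      have degG: "degree G = 2 * n" unfolding G_def
        using dQn n1 by (subst degree_add_eq_left) auto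
      have lcG: "lead_coeff G = 1" using degG dQn n1 unfolding G_def by (simp add: coeff_pCons split: nat.split)
      have hc: "\<And>x y. complex_of_real (x + y) = of_real x + of_real y" "\<And>x y. complex_of_real (x * y) = of_real x * of_real y"
        "complex_of_real 0 = 0" "complex_of_real 1 = 1" by simp_all
      have hk: "\<And>x y. (of_real (x + y)::'k) = of_real x + of_real y" "\<And>x y. (of_real (x * y)::'k) = of_real x * of_real y"
        "(of_real 0::'k) = 0" "(of_real 1::'k) = 1" by simp_all
      have evc: "poly (map_poly complex_of_real QR0) z1 = - of_real \<epsilon>"
        unfolding QR0_def z1_def using eps cmod_power2[of z0]
        by (simp add: map_poly_pCons complex_eq_iff power2_eq_square algebra_simps)
      have root: "poly (map_poly complex_of_real G) z1 = 0"
        unfolding G_def map_poly_add_hom[OF hc(1,3)] map_poly_power_hom[OF hc]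
        by (simp add: evc map_poly_pCons)
      have evk: "poly (map_poly of_real QR0) \<xi> = q z0"
        unfolding QR0_def q_def by (simp add: map_poly_pCons algebra_simps power2_eq_square)
      have evG: "poly (map_poly of_real G) \<xi> = (q z0) ^ n - of_real ((- \<epsilon>) ^ n)"
        unfolding G_def map_poly_add_hom[OF hk(1,3)] map_poly_power_hom[OF hk]
        by (simp add: evk map_poly_pCons)
      have "norm (poly (map_poly of_real G) \<xi>) \<le> m ^ n + \<epsilon> ^ n"
      proof -
        have "norm ((q z0) ^ n - (of_real ((- \<epsilon>) ^ n)::'k)) \<le> norm ((q z0) ^ n) + norm (of_real ((- \<epsilon>) ^ n)::'k)"
          by (rule norm_triangle_ineq4)
        moreover have "norm ((q z0) ^ n) = m ^ n" using fz0 by (simp add: f_def norm_power)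
        moreover have "norm (of_real ((- \<epsilon>) ^ n)::'k) = \<epsilon> ^ n" using eps by (simp add: norm_power)
        ultimately show ?thesis unfolding evG by simp
      qed
      then have n2: "norm (poly (map_poly of_real G) \<xi>) ^ 2 \<le> (m ^ n + \<epsilon> ^ n) ^ 2"
        by (simp add: power_mono)
      have "f z1 * m ^ (degree G - 1) \<le> norm (poly (map_poly of_real G) \<xi>) ^ 2"
        using poly_key[OF lcG root, of m \<xi>] minf mpos unfolding f_def q_def m_def by simp
      then show ?thesis using n2 degG by simp
    qed
    obtain n0 where n0: "(1/2::real) ^ n0 < (f z1 - m) / (3 * m)"
      using real_arch_pow_inv[of "(f z1 - m) / (3 * m)" "1/2"] fz1 mpos by auto
    define n where "n = Suc n0"
    define h where "h = (1/2::real) ^ n"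
    have h0: "0 \<le> h" "h \<le> 1" by (simp_all add: h_def power_le_one)
    have hlt: "h < (f z1 - m) / (3 * m)"
    proof -
      have "h \<le> (1/2) ^ n0" unfolding h_def n_def by simp
      then show ?thesis using n0 by linarith
    qed
    have en: "\<epsilon> ^ n = m ^ n * h" unfolding \<epsilon>_def h_def by (simp add: power_mult_distrib[symmetric])
    have "f z1 * m ^ (2 * n - 1) \<le> (m ^ n + m ^ n * h)^2" using ineq[of n] en n_def by simp
    also have "\<dots> = m ^ (2 * n - 1) * (m * (1 + h)^2)"
    proof -
      have "m ^ (2 * n) = m ^ (2 * n - 1) * m" unfolding n_def by (simp add: power_Suc2[symmetric])
      moreover have "(m ^ n + m ^ n * h)^2 = m ^ (2 * n) * (1 + h)^2"
      proof -
        have "m ^ n + m ^ n * h = m ^ n * (1 + h)" by (simp add: distrib_left)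
        then have "(m ^ n + m ^ n * h)^2 = (m ^ n)^2 * (1 + h)^2" by (simp add: power_mult_distrib)
        moreover have "(m ^ n)^2 = m ^ (2 * n)" by (simp add: power_mult[symmetric] mult.commute)
        ultimately show ?thesis by simp
      qed
      ultimately show ?thesis by simp
    qed
    finally have "f z1 \<le> m * (1 + h)^2" using mpos by simp
    also have "\<dots> \<le> m * (1 + 3 * h)"
    proof -
      have "h * h \<le> h" using h0 by (simp add: mult_left_le_one_le)
      then have "(1 + h)^2 \<le> 1 + 3 * h" by (simp add: power2_eq_square algebra_simps)
      then show ?thesis using mpos by (intro mult_left_mono) auto
    qed
    also have "\<dots> < f z1"
    proof -
      have "h * (3 * m) < f z1 - m" using hlt mpos by (simp add: pos_less_divide_eq)
      then show ?thesis by (simp add: algebra_simps)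
    qed
    finally show ?thesis by simp
  qed
qed

lemma field_embed_aux:
  fixes j :: "'k::real_normed_field"
  assumes j2: "j * j = -1" and spanj: "\<And>x::'k. \<exists>u v. x = of_real u + of_real v * j"
  shows "\<exists>\<psi>::'k \<Rightarrow> complex. (\<forall>x y. \<psi> (x + y) = \<psi> x + \<psi> y) \<and> (\<forall>x y. \<psi> (x * y) = \<psi> x * \<psi> y)
          \<and> (\<forall>r. \<psi> (of_real r) = of_real r) \<and> (\<forall>x. cmod (\<psi> x) = norm x) \<and> range \<psi> = UNIV"
proof -
  define \<phi> where "\<phi> z = of_real (Re z) + of_real (Im z) * j" for z
  have jnr: "j \<noteq> of_real t" for t
  proof
    assume "j = of_real t"
    then have "(of_real (t * t)::'k) = of_real (-1)" using j2 by simp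
    then have "t * t = -1" by (simp only: of_real_eq_iff)
    moreover have "0 \<le> t * t" by simp
    ultimately show False by linarith
  qed
  have uniq: "u = u' \<and> v = v'" if "(of_real u + of_real v * j :: 'k) = of_real u' + of_real v' * j" for u v u' v'
  proof (cases "v = v'")
    case True then show ?thesis using that by simp
  next
    case False
    then have "of_real (v - v') * j = (of_real (u' - u) :: 'k)" using that by (simp add: algebra_simps)
    then have "j = of_real ((u' - u) / (v - v'))" using False
      by (simp add: field_simps)
    then show ?thesis using jnr by blast
  qed
  have phi_inj: "\<phi> z = \<phi> w \<Longrightarrow> z = w" for z w using uniq[of "Re z" "Im z" "Re w" "Im w"]
    by (simp add: \<phi>_def complex_eq_iff)
  have phi_surj: "\<exists>z. x = \<phi> z" for x
  proof -
    obtain u v where "x = of_real u + of_real v * j" using spanj by blast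
    then show ?thesis by (intro exI[of _ "Complex u v"]) (simp add: \<phi>_def)
  qed
  have phi_add: "\<phi> (z + w) = \<phi> z + \<phi> w" for z w by (simp add: \<phi>_def algebra_simps)
  have phi_mult: "\<phi> (z * w) = \<phi> z * \<phi> w" for z w
  proof -
    have "\<phi> z * \<phi> w = of_real (Re z * Re w) + of_real (Re z * Im w + Im z * Re w) * j + of_real (Im z * Im w) * (j * j)"
      by (simp add: \<phi>_def algebra_simps)
    also have "\<dots> = \<phi> (z * w)" using j2 by (simp add: \<phi>_def algebra_simps)
    finally show ?thesis by simp
  qed
  have phi_real: "\<phi> (of_real r) = of_real r" for r by (simp add: \<phi>_def)
  have phi_one: "\<phi> 1 = 1" using phi_real[of 1] by simp
  have phi_pow: "\<phi> (z ^ n) = \<phi> z ^ n" for z n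
    by (induction n) (simp_all add: phi_mult phi_one)
  have nj: "norm j = 1"
  proof -
    have "norm j * norm j = 1" using j2 by (metis norm_minus_cancel norm_mult norm_one)
    then have "sqrt (norm j * norm j) = 1" by simp
    then show ?thesis by simp
  qed
  have phi_le: "norm (\<phi> z) \<le> 2 * cmod z" for z
  proof -
    have "norm (\<phi> z) \<le> norm (of_real (Re z)::'k) + norm (of_real (Im z) * j)"
      unfolding \<phi>_def by (rule norm_triangle_ineq)
    also have "\<dots> = \<bar>Re z\<bar> + \<bar>Im z\<bar>" by (simp add: norm_mult nj)
    also have "\<dots> \<le> 2 * cmod z" using abs_Re_le_cmod[of z] abs_Im_le_cmod[of z] by linarith
    finally show ?thesis .
  qed
  have unit_le: "norm (\<phi> u) \<le> 1" if "cmod u = 1" for u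
  proof (rule ccontr)
    assume "\<not> ?thesis"
    then have "1 < norm (\<phi> u)" by simp
    then obtain n where "2 < norm (\<phi> u) ^ n" using real_arch_pow by blast
    moreover have "norm (\<phi> u) ^ n = norm (\<phi> (u ^ n))" by (simp add: phi_pow norm_power)
    moreover have "norm (\<phi> (u ^ n)) \<le> 2" using phi_le[of "u ^ n"] that by (simp add: norm_power)
    ultimately show False by simp
  qed
  have unit_eq: "norm (\<phi> u) = 1" if "cmod u = 1" for u
  proof -
    have "\<phi> u * \<phi> (cnj u) = 1"
      using that by (simp add: phi_mult[symmetric] complex_mult_cnj cmod_power2[symmetric] phi_one)
    then have "norm (\<phi> u) * norm (\<phi> (cnj u)) = 1" by (metis norm_mult norm_one)
    moreover have "norm (\<phi> (cnj u)) \<le> 1" using unit_le[of "cnj u"] that by simp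
    moreover have "norm (\<phi> u) \<le> 1" using unit_le that by simp
    moreover have "norm (\<phi> u) * norm (\<phi> (cnj u)) \<le> norm (\<phi> u) * 1"
      by (rule mult_left_mono) (use calculation in auto)
    ultimately show ?thesis by linarith
  qed
  have phi_norm: "norm (\<phi> z) = cmod z" for z
  proof (cases "z = 0")
    case True then show ?thesis using phi_real[of 0] by simp
  next
    case False
    define u where "u = z / of_real (cmod z)"
    have cu: "cmod u = 1" using False by (simp add: u_def norm_divide)
    have "z = of_real (cmod z) * u" using False by (simp add: u_def)
    then have "\<phi> z = of_real (cmod z) * \<phi> u" by (metis phi_mult phi_real)
    then show ?thesis using unit_eq[OF cu] by (simp add: norm_mult)
  qed
  define \<psi> where "\<psi> x = (SOME z. x = \<phi> z)" for x
  have phipsi: "\<phi> (\<psi> x) = x" for x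
  proof -
    have "x = \<phi> (\<psi> x)" unfolding \<psi>_def by (rule someI_ex) (rule phi_surj)
    then show ?thesis by (rule sym)
  qed
  have psiphi: "\<psi> (\<phi> z) = z" for z using phipsi[of "\<phi> z"] phi_inj by blast
  show ?thesis
  proof (intro exI[of _ \<psi>] conjI allI)
    show "\<psi> (x + y) = \<psi> x + \<psi> y" for x y
    proof -
      have "\<psi> (x + y) = \<psi> (\<phi> (\<psi> x + \<psi> y))" by (simp add: phi_add phipsi)
      then show ?thesis by (simp add: psiphi)
    qed
    show "\<psi> (x * y) = \<psi> x * \<psi> y" for x y
    proof -
      have "\<psi> (x * y) = \<psi> (\<phi> (\<psi> x * \<psi> y))" by (simp add: phi_mult phipsi)
      then show ?thesis by (simp add: psiphi)
    qed
    show "\<psi> (of_real r) = of_real r" for r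
    proof -
      have "\<psi> (of_real r) = \<psi> (\<phi> (of_real r))" by (simp add: phi_real)
      then show ?thesis by (simp add: psiphi)
    qed
    show "cmod (\<psi> x) = norm x" for x
    proof -
      have "norm x = norm (\<phi> (\<psi> x))" by (simp add: phipsi)
      then show ?thesis by (simp add: phi_norm)
    qed
    show "range \<psi> = UNIV"
    proof (rule surjI)
      show "\<psi> (\<phi> z) = z" for z by (rule psiphi)
    qed
  qed
qed

lemma field_embed:
  shows "\<exists>\<psi>::'k::real_normed_field \<Rightarrow> complex. (\<forall>x y. \<psi> (x + y) = \<psi> x + \<psi> y) \<and> (\<forall>x y. \<psi> (x * y) = \<psi> x * \<psi> y)
          \<and> (\<forall>r. \<psi> (of_real r) = of_real r) \<and> (\<forall>x. cmod (\<psi> x) = norm x) \<and> (range \<psi> = UNIV \<or> range \<psi> = \<real>)"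
proof (cases "\<forall>x::'k. \<exists>r. x = of_real r")
  case True
  define re where "re x = (SOME r. x = of_real r)" for x :: 'k
  have rex: "x = of_real (re x)" for x unfolding re_def by (rule someI_ex) (use True in blast)
  have rex': "of_real (re x) = x" for x using rex[of x] by (rule sym)
  have reof: "re (of_real r) = r" for r
  proof -
    have "(of_real (re (of_real r))::'k) = of_real r" by (rule rex')
    then show ?thesis by (simp only: of_real_eq_iff)
  qed
  have re_add: "re (x + y) = re x + re y" for x y
  proof -
    have "(of_real (re (x + y))::'k) = of_real (re x + re y)" by (simp only: of_real_add rex')
    then show ?thesis by (simp only: of_real_eq_iff)
  qed
  have re_mult: "re (x * y) = re x * re y" for x y
  proof -
    have "(of_real (re (x * y))::'k) = of_real (re x * re y)" by (simp only: of_real_mult rex')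
    then show ?thesis by (simp only: of_real_eq_iff)
  qed
  show ?thesis
  proof (intro exI[of _ "\<lambda>x. complex_of_real (re x)"] conjI allI)
    show "complex_of_real (re (x + y)) = complex_of_real (re x) + complex_of_real (re y)" for x y
      by (simp add: re_add)
    show "complex_of_real (re (x * y)) = complex_of_real (re x) * complex_of_real (re y)" for x y
      by (simp add: re_mult)
    show "complex_of_real (re (of_real r)) = of_real r" for r by (simp add: reof)
    show "cmod (complex_of_real (re x)) = norm x" for x
    proof -
      have "norm x = norm (of_real (re x)::'k)" by (simp only: rex')
      then show ?thesis by simp
    qed
    have "range (\<lambda>x::'k. complex_of_real (re x)) = \<real>"
    proof
      show "range (\<lambda>x::'k. complex_of_real (re x)) \<subseteq> \<real>" by auto
      show "\<real> \<subseteq> range (\<lambda>x::'k. complex_of_real (re x))"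
      proof
        fix c :: complex assume "c \<in> \<real>"
        then obtain t where "c = of_real t" by (auto elim: Reals_cases)
        then have "c = complex_of_real (re (of_real t :: 'k))" by (simp add: reof)
        then show "c \<in> range (\<lambda>x::'k. complex_of_real (re x))" by blast
      qed
    qed
    then show "range (\<lambda>x::'k. complex_of_real (re x)) = UNIV \<or> range (\<lambda>x::'k. complex_of_real (re x)) = \<real>" by simp
  qed
next
  case False
  then obtain \<xi> :: 'k where xi: "\<And>r. \<xi> \<noteq> of_real r" by blast
  have quad: "\<exists>a b. (x - of_real a)^2 = - of_real (b^2)" for x :: 'k
  proof -
    obtain z where "x^2 - of_real (2 * Re z) * x + of_real ((cmod z)^2) = 0" using quad_root by blast
    moreover have "(x - of_real (Re z))^2 + of_real ((Im z)^2) = x^2 - of_real (2 * Re z) * x + of_real ((cmod z)^2)"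
      unfolding cmod_power2 by (simp add: power2_eq_square algebra_simps)
    ultimately have "(x - of_real (Re z))^2 = - of_real ((Im z)^2)"
      by (simp add: eq_neg_iff_add_eq_0)
    then show ?thesis by blast
  qed
  obtain a b where ab: "(\<xi> - of_real a)^2 = - of_real (b^2)" using quad by blast
  have b0: "b \<noteq> 0"
  proof
    assume "b = 0"
    then have "\<xi> - of_real a = 0" using ab by simp
    then show False using xi[of a] by simp
  qed
  define j where "j = (\<xi> - of_real a) / of_real b"
  have j2: "j * j = -1"
  proof -
    have "j * j = (\<xi> - of_real a)^2 / of_real (b^2)" by (simp add: j_def power2_eq_square)
    also have "\<dots> = -1" using ab b0 by simp
    finally show ?thesis .
  qed
  have spanj: "\<exists>u v. x = of_real u + of_real v * j" for x :: 'k
  proof -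
    obtain a' b' where ab': "(x - of_real a')^2 = - of_real (b'^2)" using quad by blast
    have "(x - of_real a' - of_real b' * j) * (x - of_real a' + of_real b' * j) = (x - of_real a')^2 - of_real (b'^2) * (j * j)"
      by (simp add: power2_eq_square algebra_simps)
    also have "\<dots> = 0" using ab' j2 by simp
    finally have "x - of_real a' - of_real b' * j = 0 \<or> x - of_real a' + of_real b' * j = 0" by simp
    then show ?thesis
    proof
      assume "x - of_real a' - of_real b' * j = 0"
      then show ?thesis by (intro exI[of _ a'] exI[of _ b']) (simp add: algebra_simps)
    next
      assume "x - of_real a' + of_real b' * j = 0"
      then show ?thesis by (intro exI[of _ a'] exI[of _ "- b'"]) (simp add: algebra_simps)
    qed
  qed
  from field_embed_aux[OF j2 spanj] show ?thesis by blast
qed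

lemma cmod_parallelogram:
  fixes a b p :: complex
  shows "(cmod (a - b))^2 = 2 * (cmod (a - p))^2 + 2 * (cmod (b - p))^2 - 4 * (cmod ((a + b) / 2 - p))^2"
  unfolding cmod_power2 by (simp add: power2_eq_square field_simps)

lemma cmod_expand:
  fixes v w :: complex and t :: real
  shows "(cmod (v + of_real t * w))^2 = (cmod v)^2 + 2 * t * Re (cnj v * w) + t^2 * (cmod w)^2"
  unfolding cmod_power2 by (simp add: power2_eq_square algebra_simps)

lemma sep_lemma:
  fixes C :: "('v \<Rightarrow> complex) set" and p :: "'v \<Rightarrow> complex" and S :: "'v set"
  assumes S: "finite S" and Cne: "C \<noteq> {}"
    and cvx: "\<And>z w t. z \<in> C \<Longrightarrow> w \<in> C \<Longrightarrow> 0 \<le> t \<Longrightarrow> t \<le> 1 \<Longrightarrow> (\<lambda>A. of_real t * z A + of_real (1 - t) * w A) \<in> C"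
    and far: "\<And>z. z \<in> C \<Longrightarrow> \<exists>A\<in>S. \<epsilon> \<le> cmod (z A - p A)" and eps: "\<epsilon> > 0"
  shows "\<exists>v \<delta>. \<delta> > 0 \<and> (\<forall>z\<in>C. \<delta> \<le> Re (\<Sum>A\<in>S. cnj (v A) * (z A - p A)))"
proof -
  define \<Phi> where "\<Phi> z = (\<Sum>A\<in>S. (cmod (z A - p A))^2)" for z :: "'v \<Rightarrow> complex"
  have Phi_ge: "\<epsilon>^2 \<le> \<Phi> z" if zC: "z \<in> C" for z
  proof -
    obtain A where A: "A \<in> S" "\<epsilon> \<le> cmod (z A - p A)" using far[OF zC] by blast
    have "\<epsilon>^2 \<le> (cmod (z A - p A))^2" using A eps by (intro power_mono) auto
    also have "\<dots> \<le> \<Phi> z" unfolding \<Phi>_def using A S by (intro member_le_sum) auto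
    finally show ?thesis .
  qed
  define d where "d = Inf (\<Phi> ` C)"
  have bdd: "bdd_below (\<Phi> ` C)" using Phi_ge by (meson bdd_belowI2)
  have d_le: "d \<le> \<Phi> z" if "z \<in> C" for z unfolding d_def using bdd that by (simp add: cInf_lower)
  have d_ge: "\<epsilon>^2 \<le> d" unfolding d_def using Cne Phi_ge by (intro cInf_greatest) auto
  have dpos: "d > 0"
  proof -
    have "\<epsilon>^2 > 0" using eps by simp
    then show ?thesis using d_ge by linarith
  qed
  have "\<forall>k. \<exists>c. c \<in> C \<and> \<Phi> c < d + 1 / real (Suc k)"
  proof
    fix k
    have "Inf (\<Phi> ` C) < d + 1 / real (Suc k)" unfolding d_def by simp
    moreover have ne: "\<Phi> ` C \<noteq> {}" using Cne by simp
    ultimately obtain y where "y \<in> \<Phi> ` C" "y < d + 1 / real (Suc k)" using cInf_lessD[OF ne] by blast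
    then show "\<exists>c. c \<in> C \<and> \<Phi> c < d + 1 / real (Suc k)" by blast
  qed
  then obtain c where c': "\<forall>k. c k \<in> C \<and> \<Phi> (c k) < d + 1 / real (Suc k)"
    using choice[of "\<lambda>k c. c \<in> C \<and> \<Phi> c < d + 1 / real (Suc k)"] by blast
  then have c: "\<And>k. c k \<in> C" "\<And>k. \<Phi> (c k) < d + 1 / real (Suc k)" by auto
  have mid: "(\<lambda>A. (c k A + c l A) / 2) \<in> C" for k l
  proof -
    have "(\<lambda>A. of_real (1/2) * c k A + of_real (1 - 1/2) * c l A) \<in> C"
      using cvx[OF c(1)[of k] c(1)[of l], of "1/2"] by simp
    moreover have "(\<lambda>A. of_real (1/2) * c k A + of_real (1 - 1/2) * c l A) = (\<lambda>A. (c k A + c l A) / 2)"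
      by (rule ext) (simp add: field_simps)
    ultimately show ?thesis by simp
  qed
  have close: "(\<Sum>A\<in>S. (cmod (c k A - c l A))^2) \<le> 2 / real (Suc k) + 2 / real (Suc l)" for k l
  proof -
    have "(\<Sum>A\<in>S. (cmod (c k A - c l A))^2) = 2 * \<Phi> (c k) + 2 * \<Phi> (c l) - 4 * \<Phi> (\<lambda>A. (c k A + c l A) / 2)"
    proof -
      have "(\<Sum>A\<in>S. (cmod (c k A - c l A))^2) = (\<Sum>A\<in>S. 2 * (cmod (c k A - p A))^2 + 2 * (cmod (c l A - p A))^2 - 4 * (cmod ((c k A + c l A) / 2 - p A))^2)"
        by (rule sum.cong) (rule refl, rule cmod_parallelogram)
      also have "\<dots> = 2 * \<Phi> (c k) + 2 * \<Phi> (c l) - 4 * \<Phi> (\<lambda>A. (c k A + c l A) / 2)"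
        unfolding \<Phi>_def by (simp add: sum_subtractf sum.distrib sum_distrib_left)
      finally show ?thesis .
    qed
    also have "\<dots> \<le> 2 / real (Suc k) + 2 / real (Suc l)"
      using c(2)[of k] c(2)[of l] d_le[OF mid[of k l]] by linarith
    finally show ?thesis .
  qed
  have coord_close: "(cmod (c k A - c l A))^2 \<le> 2 / real (Suc k) + 2 / real (Suc l)" if "A \<in> S" for k l A
  proof -
    have "(cmod (c k A - c l A))^2 \<le> (\<Sum>A\<in>S. (cmod (c k A - c l A))^2)"
      by (rule member_le_sum) (use that S in auto)
    then show ?thesis using close[of k l] by linarith
  qed
  have cauchy: "Cauchy (\<lambda>k. c k A)" if "A \<in> S" for A
  proof (rule metric_CauchyI)
    fix e :: real assume e: "e > 0"
    obtain M :: nat where M: "4 / e^2 < real M" using reals_Archimedean2 by blast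
    show "\<exists>M. \<forall>m\<ge>M. \<forall>n\<ge>M. dist (c m A) (c n A) < e"
    proof (intro exI allI impI)
      fix m n assume mn: "M \<le> m" "M \<le> n"
      have e2: "e^2 > 0" using e by simp
      have "2 / real (Suc m) \<le> 2 / real (Suc M)" "2 / real (Suc n) \<le> 2 / real (Suc M)"
        using mn by (simp_all add: frac_le)
      moreover have "4 / real (Suc M) < e^2"
      proof -
        have "4 < e^2 * real M" using M e2 by (simp add: field_simps)
        also have "\<dots> \<le> e^2 * real (Suc M)" using e2 by simp
        finally show ?thesis by (simp add: field_simps)
      qed
      ultimately have "(cmod (c m A - c n A))^2 < e^2" using coord_close[OF that, of m n] by simp
      then have "cmod (c m A - c n A) < e" using e by (simp add: power_less_imp_less_base)
      then show "dist (c m A) (c n A) < e" by (simp add: dist_norm)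
    qed
  qed
  define q where "q A = lim (\<lambda>k. c k A)" for A
  have qlim: "(\<lambda>k. c k A) \<longlonglongrightarrow> q A" if "A \<in> S" for A
    using cauchy[OF that] unfolding q_def by (simp add: Cauchy_convergent_iff convergent_LIMSEQ_iff)
  have Phi_lim: "(\<lambda>k. \<Phi> (c k)) \<longlonglongrightarrow> \<Phi> q"
    unfolding \<Phi>_def by (intro tendsto_sum tendsto_intros qlim) 
  have Phi_lim2: "(\<lambda>k. \<Phi> (c k)) \<longlonglongrightarrow> d"
  proof (rule tendsto_sandwich[of "\<lambda>k. d" _ _ "\<lambda>k. d + 1 / real (Suc k)"])
    show "\<forall>\<^sub>F k in sequentially. d \<le> \<Phi> (c k)" using d_le c(1) by simp
    show "\<forall>\<^sub>F k in sequentially. \<Phi> (c k) \<le> d + 1 / real (Suc k)" using c(2) by (simp add: less_imp_le)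
    show "(\<lambda>k. d) \<longlonglongrightarrow> d" by simp
    show "(\<lambda>k. d + 1 / real (Suc k)) \<longlonglongrightarrow> d"
      using tendsto_add[OF tendsto_const[of d] LIMSEQ_inverse_real_of_nat] by (simp add: inverse_eq_divide)
  qed
  have Phiq: "\<Phi> q = d" using LIMSEQ_unique[OF Phi_lim Phi_lim2] .
  define v where "v A = q A - p A" for A
  have var: "0 \<le> (\<Sum>A\<in>S. Re (cnj (v A) * (z A - q A)))" if z: "z \<in> C" for z
  proof -
    define X where "X = (\<Sum>A\<in>S. Re (cnj (v A) * (z A - q A)))"
    define W where "W = (\<Sum>A\<in>S. (cmod (z A - q A))^2)"
    have W0: "W \<ge> 0" unfolding W_def by (intro sum_nonneg) auto
    have key: "0 \<le> 2 * X + t * W" if t: "0 < t" "t \<le> 1" for t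
    proof -
      define y where "y = (\<lambda>A. of_real t * z A + of_real (1 - t) * q A)"
      have ylim: "(\<lambda>k. \<Phi> (\<lambda>A. of_real t * z A + of_real (1 - t) * c k A)) \<longlonglongrightarrow> \<Phi> y"
        unfolding \<Phi>_def y_def by (intro tendsto_sum tendsto_intros qlim)
      have "d \<le> \<Phi> y"
        using ylim by (rule LIMSEQ_le_const) (use d_le cvx[OF z c(1)] t in auto)
      moreover have "\<Phi> y = \<Phi> q + 2 * t * X + t^2 * W"
      proof -
        have "y A - p A = v A + of_real t * (z A - q A)" for A
          by (simp add: y_def v_def algebra_simps)
        then have "\<Phi> y = (\<Sum>A\<in>S. (cmod (v A))^2 + 2 * t * Re (cnj (v A) * (z A - q A)) + t^2 * (cmod (z A - q A))^2)"
          unfolding \<Phi>_def by (simp add: cmod_expand)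
        also have "\<dots> = \<Phi> q + 2 * t * X + t^2 * W"
          unfolding \<Phi>_def X_def W_def v_def by (simp add: sum.distrib sum_distrib_left)
        finally show ?thesis .
      qed
      ultimately have "0 \<le> t * (2 * X + t * W)" using Phiq by (simp add: power2_eq_square algebra_simps)
      then show ?thesis using t by (simp add: zero_le_mult_iff)
    qed
    show ?thesis
    proof (rule ccontr)
      assume "\<not> ?thesis"
      then have Xn: "X < 0" unfolding X_def by simp
      show False
      proof (cases "W = 0")
        case True then show False using key[of 1] Xn by simp
      next
        case False
        then have Wp: "W > 0" using W0 by simp
        define t where "t = min 1 (- X / W)"
        have t: "0 < t" "t \<le> 1" using Xn Wp by (simp_all add: t_def divide_neg_pos)
        have "t * W \<le> - X" using Wp by (simp add: t_def min_def field_simps)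
        then show False using key[OF t] Xn by simp
      qed
    qed
  qed
  show ?thesis
  proof (intro exI conjI ballI)
    show "d > 0" by (rule dpos)
    fix z assume z: "z \<in> C"
    have "Re (\<Sum>A\<in>S. cnj (v A) * (z A - p A)) = (\<Sum>A\<in>S. Re (cnj (v A) * (z A - q A))) + (\<Sum>A\<in>S. (cmod (v A))^2)"
    proof -
      have "Re (cnj (v A) * (z A - p A)) = Re (cnj (v A) * (z A - q A)) + (cmod (v A))^2" for A
        unfolding v_def cmod_power2 by (simp add: power2_eq_square algebra_simps)
      then show ?thesis by (simp add: Re_sum sum.distrib)
    qed
    also have "(\<Sum>A\<in>S. (cmod (v A))^2) = d" using Phiq by (simp add: \<Phi>_def v_def)
    finally show "d \<le> Re (\<Sum>A\<in>S. cnj (v A) * (z A - p A))" using var[OF z] by simp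
  qed
qed

lemma dH_lt_ex1:
  assumes "dH A F G < ereal e" "\<sigma> \<in> F"
  shows "\<exists>\<tau>\<in>G. norm (\<sigma> A - \<tau> A) < e"
proof -
  have "(INF \<tau>\<in>G. ereal (norm (\<sigma> A - \<tau> A))) \<le> (SUP \<sigma>\<in>F. INF \<tau>\<in>G. ereal (norm (\<sigma> A - \<tau> A)))"
    using assms(2) by (rule SUP_upper)
  also have "\<dots> \<le> dH A F G" unfolding dH_def by simp
  finally have "(INF \<tau>\<in>G. ereal (norm (\<sigma> A - \<tau> A))) < ereal e" using assms(1) by simp
  then show ?thesis by (simp add: INF_less_iff)
qed

lemma dH_lt_ex2:
  assumes "dH A F G < ereal e" "\<tau> \<in> G"
  shows "\<exists>\<sigma>\<in>F. norm (\<sigma> A - \<tau> A) < e"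
proof -
  have "(INF \<sigma>\<in>F. ereal (norm (\<sigma> A - \<tau> A))) \<le> (SUP \<tau>\<in>G. INF \<sigma>\<in>F. ereal (norm (\<sigma> A - \<tau> A)))"
    using assms(2) by (rule SUP_upper)
  also have "\<dots> \<le> dH A F G" unfolding dH_def by simp
  finally have "(INF \<sigma>\<in>F. ereal (norm (\<sigma> A - \<tau> A))) < ereal e" using assms(1) by simp
  then show ?thesis by (simp add: INF_less_iff)
qed

lemma linear_sum_sc:
  assumes "Vector_Spaces.linear sc (*) \<rho>" "finite S"
  shows "\<rho> (\<Sum>A\<in>S. sc (w A) A) = (\<Sum>A\<in>S. w A * \<rho> A)"
proof -
  have mh: "\<forall>x y. \<rho> (x + y) = \<rho> x + \<rho> y" "\<forall>c x. \<rho> (sc c x) = c * \<rho> x"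
    using assms(1) unfolding linear_iff_module_hom module_hom_iff by auto
  have "\<rho> 0 = \<rho> 0 + \<rho> 0" using mh(1)[rule_format, of 0 0] by simp
  then have z: "\<rho> 0 = 0" by (rule add_cancel_right_right[THEN iffD1])
  show ?thesis using assms(2)
    by (induction S rule: finite_induct) (simp_all add: z mh)
qed

lemma psi_sum:
  assumes "\<forall>x y. \<psi> (x + y) = \<psi> x + (\<psi> y :: complex)" "finite S"
  shows "\<psi> (\<Sum>A\<in>S. f A) = (\<Sum>A\<in>S. \<psi> (f A))"
proof -
  have "\<psi> 0 = \<psi> 0 + \<psi> 0" using assms(1)[rule_format, of 0 0] by simp
  then have z: "\<psi> 0 = 0" by simp
  show ?thesis using assms(2) by (induction S rule: finite_induct) (simp_all add: z assms(1))
qed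

lemma sep_exists:
  fixes sc :: "'k::real_normed_field \<Rightarrow> 'v::{ab_group_add,t2_space} \<Rightarrow> 'v"
  assumes \<sigma>: "\<sigma> \<in> tdual sc" and G: "G \<in> CFstar sc" and nG: "\<sigma> \<notin> G"
  shows "\<exists>B \<delta>. \<delta> > 0 \<and> (\<forall>\<tau>\<in>G. \<delta> \<le> norm (\<sigma> B - \<tau> B))"
proof -
  have Gne: "G \<noteq> {}" and Gcl: "closedin (weak_star sc) G" and Gcv: "convex_fun_set G"
    using G by (auto simp: CFstar_def Fstar_def)
  obtain U where U: "closedin (product_topology (\<lambda>_. euclidean) UNIV) U" "G = U \<inter> tdual sc"
    using Gcl unfolding weak_star_def closedin_subtopology by blast
  have sU: "\<sigma> \<notin> U" using U(2) \<sigma> nG by blast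
  have "openin (product_topology (\<lambda>_. euclidean) UNIV) (- U)"
    using U(1) unfolding closedin_def by (simp add: Compl_eq_Diff_UNIV)
  then have "\<exists>V. finite {i \<in> UNIV. V i \<noteq> topspace euclidean} \<and> (\<forall>i\<in>UNIV. openin euclidean (V i)) \<and> \<sigma> \<in> Pi\<^sub>E UNIV V \<and> Pi\<^sub>E UNIV V \<subseteq> - U"
    using sU unfolding openin_product_topology_alt by blast
  then obtain V where V0: "finite {i \<in> UNIV. V i \<noteq> topspace euclidean} \<and> (\<forall>i\<in>UNIV. openin euclidean (V i))
     \<and> \<sigma> \<in> Pi\<^sub>E UNIV V \<and> Pi\<^sub>E UNIV V \<subseteq> - U" ..
  have V1: "finite {i. V i \<noteq> UNIV}" using conjunct1[OF V0] by simp
  have V2: "open (V i)" for i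
  proof -
    have "openin euclidean (V i)" using conjunct1[OF conjunct2[OF V0]] by blast
    then show ?thesis by simp
  qed
  have V3: "\<sigma> \<in> Pi\<^sub>E UNIV V" using conjunct1[OF conjunct2[OF conjunct2[OF V0]]] .
  have V4: "Pi\<^sub>E UNIV V \<subseteq> - U" using conjunct2[OF conjunct2[OF conjunct2[OF V0]]] .
  note V = V1 V2 V3 V4
  define S where "S = {i. V i \<noteq> UNIV}"
  have S: "finite S" using V(1) S_def by simp
  have "\<forall>A. \<exists>e>0. ball (\<sigma> A) e \<subseteq> V A"
  proof
    fix A
    have "\<sigma> A \<in> V A" using V(3) by auto
    then show "\<exists>e>0. ball (\<sigma> A) e \<subseteq> V A" using V(2)[of A] open_contains_ball by blast
  qed
  then obtain e where e: "\<And>A. e A > 0" "\<And>A. ball (\<sigma> A) (e A) \<subseteq> V A" by metis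
  define \<epsilon> where "\<epsilon> = Min (insert 1 (e ` S))"
  have eps: "\<epsilon> > 0" unfolding \<epsilon>_def using S e(1) by (subst Min_gr_iff) auto
  have epsle: "\<epsilon> \<le> e A" if "A \<in> S" for A unfolding \<epsilon>_def using S that by (intro Min_le) auto
  have far: "\<exists>A\<in>S. \<epsilon> \<le> norm (\<tau> A - \<sigma> A)" if \<tau>: "\<tau> \<in> G" for \<tau>
  proof (rule ccontr)
    assume "\<not> ?thesis"
    then have near: "\<And>A. A \<in> S \<Longrightarrow> norm (\<tau> A - \<sigma> A) < \<epsilon>" by force
    have allV: "\<tau> A \<in> V A" for A
      proof (cases "A \<in> S")
        case True
        then have "\<tau> A \<in> ball (\<sigma> A) (e A)" using near[OF True] epsle[OF True]
          by (simp add: dist_norm norm_minus_commute)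
        then show ?thesis using e(2) by blast
      next
        case False then show ?thesis by (simp add: S_def)
      qed
    have "\<tau> \<in> Pi\<^sub>E UNIV V" using allV by (simp add: PiE_iff)
    then show False using V(4) U(2) \<tau> by blast
  qed
  obtain \<psi> :: "'k \<Rightarrow> complex" where
    pa: "\<forall>x y. \<psi> (x + y) = \<psi> x + \<psi> y" and pm: "\<forall>x y. \<psi> (x * y) = \<psi> x * \<psi> y"
    and pr: "\<forall>r. \<psi> (of_real r) = of_real r" and pn: "\<forall>x. cmod (\<psi> x) = norm x"
    and prange: "range \<psi> = UNIV \<or> range \<psi> = \<real>"
    using field_embed by blast
  have pd: "\<psi> (x - y) = \<psi> x - \<psi> y" for x y
  proof -
    have "\<psi> x = \<psi> (x - y) + \<psi> y" using pa[rule_format, of "x - y" y] by simp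
    then show ?thesis by (simp add: eq_diff_eq)
  qed
  define C where "C = (\<lambda>\<tau>. \<lambda>A. \<psi> (\<tau> A)) ` G"
  define p where "p = (\<lambda>A. \<psi> (\<sigma> A))"
  have Cne: "C \<noteq> {}" using Gne C_def by simp
  have cvx: "(\<lambda>A. of_real t * z A + of_real (1 - t) * w A) \<in> C"
    if zw: "z \<in> C" "w \<in> C" and tt: "0 \<le> t" "t \<le> 1" for z w t
  proof -
    obtain \<tau>1 \<tau>2 where t12: "\<tau>1 \<in> G" "\<tau>2 \<in> G" "z = (\<lambda>A. \<psi> (\<tau>1 A))" "w = (\<lambda>A. \<psi> (\<tau>2 A))"
      using zw C_def by auto
    have "(\<lambda>x. of_real t * \<tau>1 x + of_real (1 - t) * \<tau>2 x) \<in> G"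
      using Gcv t12 tt unfolding convex_fun_set_def by blast
    moreover have "(\<lambda>A. of_real t * z A + of_real (1 - t) * w A) = (\<lambda>A. \<psi> (of_real t * \<tau>1 A + of_real (1 - t) * \<tau>2 A))"
      by (simp only: t12(3,4) pa pm pr)
    ultimately show ?thesis unfolding C_def
      using image_eqI[of _ "\<lambda>\<tau> A. \<psi> (\<tau> A)" "\<lambda>x. of_real t * \<tau>1 x + of_real (1 - t) * \<tau>2 x" G] by simp
  qed
  have farC: "\<exists>A\<in>S. \<epsilon> \<le> cmod (z A - p A)" if zC: "z \<in> C" for z
  proof -
    obtain \<tau> where "\<tau> \<in> G" "z = (\<lambda>A. \<psi> (\<tau> A))" using zC C_def by auto
    then show ?thesis using far[of \<tau>] by (simp add: p_def pd[symmetric] pn)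
  qed
  obtain v \<delta> where v: "\<delta> > 0" "\<And>z. z \<in> C \<Longrightarrow> \<delta> \<le> Re (\<Sum>A\<in>S. cnj (v A) * (z A - p A))"
    using sep_lemma[OF S Cne cvx farC eps] by blast
  obtain w where w: "\<And>\<tau>. \<tau> \<in> G \<Longrightarrow> \<delta> \<le> Re (\<Sum>A\<in>S. \<psi> (w A) * (\<psi> (\<tau> A) - \<psi> (\<sigma> A)))"
  proof (cases "range \<psi> = UNIV")
    case True
    then have "\<forall>A. \<exists>x. \<psi> x = cnj (v A)" by (metis UNIV_I image_iff)
    then obtain w where w: "\<And>A. \<psi> (w A) = cnj (v A)" by metis
    show ?thesis
    proof (rule that[of w])
      fix \<tau> assume "\<tau> \<in> G"
      then have "(\<lambda>A. \<psi> (\<tau> A)) \<in> C" by (simp add: C_def)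
      then show "\<delta> \<le> Re (\<Sum>A\<in>S. \<psi> (w A) * (\<psi> (\<tau> A) - \<psi> (\<sigma> A)))" using v(2) by (simp add: w p_def)
    qed
  next
    case False
    then have rr: "range \<psi> = \<real>" using prange by simp
    have "\<forall>A. \<exists>x. \<psi> x = of_real (Re (v A))" using pr by metis
    then obtain w where w: "\<And>A. \<psi> (w A) = of_real (Re (v A))" by metis
    show ?thesis
    proof (rule that[of w])
      fix \<tau> assume "\<tau> \<in> G"
      then have "(\<lambda>A. \<psi> (\<tau> A)) \<in> C" by (simp add: C_def)
      then have "\<delta> \<le> Re (\<Sum>A\<in>S. cnj (v A) * (\<psi> (\<tau> A) - \<psi> (\<sigma> A)))" using v(2) by (simp add: p_def)
      also have "\<dots> = Re (\<Sum>A\<in>S. \<psi> (w A) * (\<psi> (\<tau> A) - \<psi> (\<sigma> A)))"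
      proof -
        have "Re (cnj (v A) * (\<psi> (\<tau> A) - \<psi> (\<sigma> A))) = Re (\<psi> (w A) * (\<psi> (\<tau> A) - \<psi> (\<sigma> A)))" for A
        proof -
          have "\<psi> (\<tau> A - \<sigma> A) \<in> \<real>" using rr by blast
          then have "Im (\<psi> (\<tau> A) - \<psi> (\<sigma> A)) = 0" by (simp add: pd[symmetric] complex_is_Real_iff)
          then show ?thesis by (simp add: w)
        qed
        then show ?thesis by (simp add: Re_sum)
      qed
      finally show "\<delta> \<le> Re (\<Sum>A\<in>S. \<psi> (w A) * (\<psi> (\<tau> A) - \<psi> (\<sigma> A)))" .
    qed
  qed
  define B where "B = (\<Sum>A\<in>S. sc (w A) A)"
  show ?thesis
  proof (intro exI conjI ballI)
    show "\<delta> > 0" by (rule v(1))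
    fix \<tau> assume \<tau>: "\<tau> \<in> G"
    have \<tau>d: "\<tau> \<in> tdual sc" using \<tau> U(2) by blast
    have lin: "Vector_Spaces.linear sc (*) \<rho>" if "\<rho> \<in> tdual sc" for \<rho> using that by (simp add: tdual_def)
    have "\<psi> (\<tau> B - \<sigma> B) = (\<Sum>A\<in>S. \<psi> (w A) * (\<psi> (\<tau> A) - \<psi> (\<sigma> A)))"
    proof -
      have "\<tau> B - \<sigma> B = (\<Sum>A\<in>S. w A * (\<tau> A - \<sigma> A))"
        unfolding B_def linear_sum_sc[OF lin[OF \<tau>d] S] linear_sum_sc[OF lin[OF \<sigma>] S]
        by (simp add: sum_subtractf right_diff_distrib)
      then show ?thesis by (simp add: psi_sum[OF pa S] pm pd)
    qed
    then have "\<delta> \<le> Re (\<psi> (\<tau> B - \<sigma> B))" using w[OF \<tau>] by simp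
    also have "\<dots> \<le> cmod (\<psi> (\<tau> B - \<sigma> B))" by (rule complex_Re_le_cmod)
    also have "\<dots> = norm (\<sigma> B - \<tau> B)" by (simp add: pn norm_minus_commute)
    finally show "\<delta> \<le> norm (\<sigma> B - \<tau> B)" .
  qed
qed

lemma hyper_open_iff:
  "openin (hyper_topology FF) U \<longleftrightarrow> (U \<subseteq> FF \<and> (\<forall>F\<in>U. \<exists>S e. finite S \<and> e > 0 \<and>
      {G \<in> FF. \<forall>A\<in>S. dH A F G < ereal e} \<subseteq> U))"
  unfolding hyper_topology_def by (simp only: topology_inverse'[OF istopology_hyper])

lemma sep_sets:
  fixes sc :: "'k::real_normed_field \<Rightarrow> 'v::{ab_group_add,t2_space} \<Rightarrow> 'v"
  assumes F: "F \<in> Fstar sc" and G: "G \<in> CFstar sc" and \<sigma>: "\<sigma> \<in> F" "\<sigma> \<notin> G"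
  shows "\<exists>U V. openin (hyper_topology (Fstar sc)) U \<and> openin (hyper_topology (Fstar sc)) V \<and> F \<in> U \<and> G \<in> V \<and> disjnt U V"
proof -
  have "F \<subseteq> topspace (weak_star sc)" using F by (simp add: Fstar_def closedin_subset)
  then have \<sigma>d: "\<sigma> \<in> tdual sc" using \<sigma>(1) by (auto simp: weak_star_def)
  obtain B \<delta> where B: "\<delta> > 0" "\<And>\<tau>. \<tau> \<in> G \<Longrightarrow> \<delta> \<le> norm (\<sigma> B - \<tau> B)"
    using sep_exists[OF \<sigma>d G \<sigma>(2)] by blast
  have GF: "G \<in> Fstar sc" using G by (simp add: CFstar_def)
  define r where "r = \<delta> / 2"
  have r: "r > 0" using B(1) r_def by simp
  define U where "U = {H \<in> Fstar sc. \<exists>\<eta>\<in>H. norm (\<eta> B - \<sigma> B) < r}"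
  define V where "V = {H \<in> Fstar sc. \<exists>s. s < r \<and> (\<forall>\<eta>\<in>H. \<exists>\<tau>\<in>G. norm (\<eta> B - \<tau> B) < s)}"
  have oU: "openin (hyper_topology (Fstar sc)) U"
    unfolding hyper_open_iff
  proof (intro conjI ballI)
    show "U \<subseteq> Fstar sc" by (auto simp: U_def)
    fix H assume "H \<in> U"
    then obtain \<eta> where \<eta>: "\<eta> \<in> H" "norm (\<eta> B - \<sigma> B) < r" by (auto simp: U_def)
    define e where "e = r - norm (\<eta> B - \<sigma> B)"
    have e: "e > 0" using \<eta> e_def by simp
    show "\<exists>S e. finite S \<and> e > 0 \<and> {G \<in> Fstar sc. \<forall>A\<in>S. dH A H G < ereal e} \<subseteq> U"
    proof (intro exI conjI)
      show "finite {B}" by simp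
      show "e > 0" by (rule e)
      show "{G \<in> Fstar sc. \<forall>A\<in>{B}. dH A H G < ereal e} \<subseteq> U"
      proof
        fix H' assume H': "H' \<in> {G \<in> Fstar sc. \<forall>A\<in>{B}. dH A H G < ereal e}"
        then have dd: "dH B H H' < ereal e" by simp
        obtain \<eta>' where \<eta>': "\<eta>' \<in> H'" "norm (\<eta> B - \<eta>' B) < e" using dH_lt_ex1[OF dd \<eta>(1)] by blast
        have "norm (\<eta>' B - \<sigma> B) \<le> norm (\<eta> B - \<eta>' B) + norm (\<eta> B - \<sigma> B)"
          using norm_triangle_ineq[of "\<eta>' B - \<eta> B" "\<eta> B - \<sigma> B"] by (simp add: norm_minus_commute)
        then have "norm (\<eta>' B - \<sigma> B) < r" using \<eta>' e_def by simp
        then show "H' \<in> U" using H' \<eta>' by (auto simp: U_def)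
      qed
    qed
  qed
  have oV: "openin (hyper_topology (Fstar sc)) V"
    unfolding hyper_open_iff
  proof (intro conjI ballI)
    show "V \<subseteq> Fstar sc" by (auto simp: V_def)
    fix H assume "H \<in> V"
    then obtain s where s: "s < r" "\<And>\<eta>. \<eta> \<in> H \<Longrightarrow> \<exists>\<tau>\<in>G. norm (\<eta> B - \<tau> B) < s" by (auto simp: V_def)
    define e where "e = (r - s) / 2"
    have e: "e > 0" using s e_def by simp
    show "\<exists>S e. finite S \<and> e > 0 \<and> {G \<in> Fstar sc. \<forall>A\<in>S. dH A H G < ereal e} \<subseteq> V"
    proof (intro exI conjI)
      show "finite {B}" by simp
      show "e > 0" by (rule e)
      show "{G' \<in> Fstar sc. \<forall>A\<in>{B}. dH A H G' < ereal e} \<subseteq> V"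
      proof
        fix H' assume H': "H' \<in> {G' \<in> Fstar sc. \<forall>A\<in>{B}. dH A H G' < ereal e}"
        then have dd: "dH B H H' < ereal e" by simp
        have "\<exists>\<tau>\<in>G. norm (\<eta>' B - \<tau> B) < s + e" if \<eta>H: "\<eta>' \<in> H'" for \<eta>'
        proof -
          obtain \<eta> where \<eta>: "\<eta> \<in> H" "norm (\<eta> B - \<eta>' B) < e" using dH_lt_ex2[OF dd \<eta>H] by blast
          obtain \<tau> where \<tau>: "\<tau> \<in> G" "norm (\<eta> B - \<tau> B) < s" using s(2)[OF \<eta>(1)] by blast
          have "norm (\<eta>' B - \<tau> B) \<le> norm (\<eta> B - \<eta>' B) + norm (\<eta> B - \<tau> B)"
            using norm_triangle_ineq[of "\<eta>' B - \<eta> B" "\<eta> B - \<tau> B"] by (simp add: norm_minus_commute)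
          then show ?thesis using \<eta> \<tau> by force
        qed
        moreover have "s + e < r" using s e_def by simp
        ultimately show "H' \<in> V" using H' unfolding V_def by blast
      qed
    qed
  qed
  have FU: "F \<in> U"
  proof -
    have "norm (\<sigma> B - \<sigma> B) < r" using r by simp
    then show ?thesis using F \<sigma>(1) unfolding U_def by blast
  qed
  have GV: "G \<in> V"
  proof -
    have "\<forall>\<eta>\<in>G. \<exists>\<tau>\<in>G. norm (\<eta> B - \<tau> B) < r / 2" using r by force
    moreover have "r / 2 < r" using r by simp
    ultimately show ?thesis using GF unfolding V_def by blast
  qed
  have "disjnt U V"
  proof (unfold disjnt_def, rule equals0I)
    fix H assume "H \<in> U \<inter> V"
    then have "H \<in> U" "H \<in> V" by auto
    then obtain \<eta> s where \<eta>: "\<eta> \<in> H" "norm (\<eta> B - \<sigma> B) < r" and s: "s < r" "\<forall>\<eta>\<in>H. \<exists>\<tau>\<in>G. norm (\<eta> B - \<tau> B) < s"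
      unfolding U_def V_def by blast
    obtain \<tau> where \<tau>: "\<tau> \<in> G" "norm (\<eta> B - \<tau> B) < s" using s(2) \<eta>(1) by blast
    have "norm (\<sigma> B - \<tau> B) \<le> norm (\<eta> B - \<sigma> B) + norm (\<eta> B - \<tau> B)"
      using norm_triangle_ineq[of "\<sigma> B - \<eta> B" "\<eta> B - \<tau> B"] by (simp add: norm_minus_commute)
    then have "norm (\<sigma> B - \<tau> B) < \<delta>" using \<eta> \<tau> s r_def by simp
    then show False using B(2)[OF \<tau>(1)] by simp
  qed
  then show ?thesis using oU oV FU GV by blast
qed

theorem corollary3p11:
  fixes sc :: "'k::real_normed_field \<Rightarrow> 'v::{ab_group_add,t2_space} \<Rightarrow> 'v"
  assumes "tvs sc"
    and "\<forall>x y. x \<noteq> y \<longrightarrow> (\<exists>f\<in>tdual sc. f x \<noteq> f y)"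
  shows "Hausdorff_space (subtopology (hyper_topology (Fstar sc)) (CFstar sc))"
  unfolding Hausdorff_space_def
proof (intro allI impI, elim conjE)
  fix F G
  assume F: "F \<in> topspace (subtopology (hyper_topology (Fstar sc)) (CFstar sc))"
    and G: "G \<in> topspace (subtopology (hyper_topology (Fstar sc)) (CFstar sc))" and FG: "F \<noteq> G"
  have FC: "F \<in> CFstar sc" and GC: "G \<in> CFstar sc" using F G by auto
  have FF: "F \<in> Fstar sc" and GF: "G \<in> Fstar sc" using FC GC by (auto simp: CFstar_def)
  obtain U V where UV: "openin (hyper_topology (Fstar sc)) U" "openin (hyper_topology (Fstar sc)) V"
    "F \<in> U" "G \<in> V" "disjnt U V"
  proof (cases "\<exists>\<sigma>\<in>F. \<sigma> \<notin> G")
    case True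
    then obtain \<sigma> where "\<sigma> \<in> F" "\<sigma> \<notin> G" by blast
    then show ?thesis using sep_sets[OF FF GC] that by blast
  next
    case False
    then have "\<exists>\<sigma>\<in>G. \<sigma> \<notin> F" using FG by blast
    then obtain \<sigma> where "\<sigma> \<in> G" "\<sigma> \<notin> F" by blast
    then obtain V U where "openin (hyper_topology (Fstar sc)) V" "openin (hyper_topology (Fstar sc)) U"
      "G \<in> V" "F \<in> U" "disjnt V U" using sep_sets[OF GF FC] by blast
    then show ?thesis using that by (meson disjnt_sym)
  qed
  show "\<exists>U V. openin (subtopology (hyper_topology (Fstar sc)) (CFstar sc)) U \<and>
              openin (subtopology (hyper_topology (Fstar sc)) (CFstar sc)) V \<and> F \<in> U \<and> G \<in> V \<and> disjnt U V"
  proof (intro exI conjI)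
    show "openin (subtopology (hyper_topology (Fstar sc)) (CFstar sc)) (U \<inter> CFstar sc)"
      using UV(1) by (auto simp: openin_subtopology)
    show "openin (subtopology (hyper_topology (Fstar sc)) (CFstar sc)) (V \<inter> CFstar sc)"
      using UV(2) by (auto simp: openin_subtopology)
    show "F \<in> U \<inter> CFstar sc" using UV(3) FC by simp
    show "G \<in> V \<inter> CFstar sc" using UV(4) GC by simp
    show "disjnt (U \<inter> CFstar sc) (V \<inter> CFstar sc)" using UV(5) by (auto simp: disjnt_def)
  qed
qed

end
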